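(* Let $0<q<1$, and for each integer $k\ge1$ let $a=a(k)>0$ (a positive, bounded function of $k$). Define \[u_n=\frac{(k+ak^{-1})^n}{n!}\,q^{-n(2k-n-1)/2}\ (n\ge0),\qquad v_j=u_{2k-j-1}-u_j\ (0\le j\le k-1).\] Then for every integer $k\ge1$, $v_j>0$ for all $0\le j\le k-1$. Furthermore, if $a=a_0+O(k^{-1})$ as $k\to\infty$ for some constant $a_0>0$, then there exists a positive integer $N(q)$ such that for every $N\ge N(q)$ and every $k\ge q^{-3N}$, one has $v_j<v_{j+1}$ for all $0\le j\le k-N$. *)

theory Defs
  imports Complex_Main "HOL-Library.Landau_Symbols"
begin

definition useq :: "real \<Rightarrow> (nat \<Rightarrow> real) \<Rightarrow> nat \<Rightarrow> nat \<Rightarrow> real" where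
  "useq q a k n = (real k + a k / real k) ^ n / fact n
      * q powr (- (real n * (2 * real k - real n - 1) / 2))"

definition vseq :: "real \<Rightarrow> (nat \<Rightarrow> real) \<Rightarrow> nat \<Rightarrow> nat \<Rightarrow> real" where
  "vseq q a k j = useq q a k (2 * k - j - 1) - useq q a k j"

end

theory Submission
  imports Defs
begin

definition AA :: "real \<Rightarrow> nat \<Rightarrow> real" where "AA x i = x^i / fact i"

lemma AA_Suc: "AA x (Suc n) = AA x n * x / real (Suc n)"
  unfolding AA_def by (simp add: field_simps)

lemma AA_pos: "x > 0 \<Longrightarrow> AA x n > 0"
  unfolding AA_def by simp

lemma AA_lt:
  assumes "x > real k"
  shows "i + d + 1 = k \<Longrightarrow> AA x i < AA x (k+d)"
proof (induction d arbitrary: i)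
  case 0
  have x0: "x > 0" using assms 0 by simp
  have "AA x (k+0) = AA x i * x / real (Suc i)" using 0 AA_Suc[of x i] by simp
  moreover have "x / real (Suc i) > 1" using assms 0 by simp
  moreover have "AA x i > 0" using AA_pos x0 by simp
  ultimately have "AA x i * 1 < AA x i * (x / real (Suc i))" by (intro mult_strict_left_mono)
  then show ?case using \<open>AA x (k+0) = AA x i * x / real (Suc i)\<close> by simp
next
  case (Suc d)
  have x0: "x > 0" using assms Suc by simp
  have IH: "AA x (Suc i) < AA x (k+d)" using Suc by simp
  have e1: "AA x (Suc i) = AA x i * x / real (Suc i)" by (rule AA_Suc)
  have e2: "AA x (k + Suc d) = AA x (k+d) * x / real (Suc (k+d))" using AA_Suc[of x "k+d"] by simp
  have pA: "AA x (k+d) > 0" using AA_pos x0 by simp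
  have ki: "real k = real i + real d + 2" using Suc.prems by simp
  have prod: "real (Suc i) * real (Suc (k+d)) \<le> x^2"
  proof -
    have "real (Suc i) * real (Suc (k+d)) = (real k)^2 - (real d + 1)^2" using ki by (simp add: algebra_simps power2_eq_square)
    also have "\<dots> \<le> (real k)^2" by simp
    also have "\<dots> \<le> x^2" using assms by (simp add: power_mono)
    finally show ?thesis .
  qed
  have "AA x i = AA x (Suc i) * real (Suc i) / x" using e1 x0 by (simp add: field_simps)
  also have "\<dots> < AA x (k+d) * real (Suc i) / x" using IH x0 by (simp add: divide_strict_right_mono)
  also have "\<dots> \<le> AA x (k+d) * x / real (Suc (k+d))"
  proof -
    have "real (Suc i) / x \<le> x / real (Suc (k+d))" using prod x0 by (simp add: field_simps power2_eq_square)
    then have "AA x (k+d) * (real (Suc i) / x) \<le> AA x (k+d) * (x / real (Suc (k+d)))" using pA by (intro mult_left_mono) auto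
    then show ?thesis by simp
  qed
  finally show ?case using e2 by simp
qed

lemma key:
  fixes P Q y R R' :: real
  assumes "Q * y^2 \<le> P * R * R'" "R' < y" "0 < R" "R \<le> R'" "y - R \<le> 4*(y - R')" "P > 0" "Q \<ge> 0"
  shows "P - Q \<le> 5 * (P - Q*y/R)" "P - Q*y/R > 0"
proof -
  have y0: "y > 0" using assms by linarith
  have R'0: "R' > 0" using assms by linarith
  have h: "Q*y/R \<le> P * R'/y" using assms(1) y0 assms(3) by (simp add: field_simps power2_eq_square)
  have h2: "P*R'/y < P" using assms y0 by (simp add: field_simps)
  show "P - Q*y/R > 0" using h h2 by linarith
  have e: "P - Q = (P - Q*y/R) + (Q*y/R)*(1 - R/y)" using y0 assms(3) by (simp add: field_simps)
  have f1: "(Q*y/R)*(1 - R/y) \<le> P*(1-R/y)"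
  proof -
    have "Q*y/R \<le> P" using h h2 by linarith
    moreover have "1 - R/y \<ge> 0" using assms y0 by (simp add: field_simps)
    ultimately show ?thesis by (intro mult_right_mono)
  qed
  have f2: "P*(1-R/y) \<le> 4*(P - P*R'/y)"
  proof -
    have "P*(1-R/y) = P*(y-R)/y" using y0 by (simp add: field_simps)
    also have "\<dots> \<le> P*(4*(y-R'))/y" using assms y0 by (simp add: divide_right_mono)
    also have "\<dots> = 4*(P - P*R'/y)" using y0 by (simp add: field_simps)
    finally show ?thesis .
  qed
  have f3: "4*(P - P*R'/y) \<le> 4*(P - Q*y/R)" using h by simp
  have "P - Q \<le> (P-Q*y/R) + P*(1-R/y)" unfolding e using f1 by (rule add_left_mono)
  also have "\<dots> \<le> (P-Q*y/R) + 4*(P - P*R'/y)" using f2 by (rule add_left_mono)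
  also have "\<dots> \<le> (P-Q*y/R) + 4*(P-Q*y/R)" using f3 by (rule add_left_mono)
  also have "\<dots> = 5*(P-Q*y/R)" by simp
  finally show "P - Q \<le> 5 * (P - Q*y/R)" .
qed

lemma helper4: fixes A Bq K R R' y :: real
  shows "A \<le> 4*Bq \<Longrightarrow> R = K - A \<Longrightarrow> R' = K - Bq \<Longrightarrow> K < y \<Longrightarrow> y - R \<le> 4*(y - R')"
  by (smt (verit))

lemma helperd: fixes x M J Q :: real
  shows "x > 0 \<Longrightarrow> M > 0 \<Longrightarrow> J > 0 \<Longrightarrow> (M/x)*(Q*x^2/(M*J)) = Q*x/J"
  by (simp add: field_simps power2_eq_square)

lemma useq_sym:
  assumes "n + n' + 1 = 2*k"
  shows "useq q a k n' = AA (real k + a k / real k) n' * q powr (- (real n * (2 * real k - real n - 1) / 2))"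
proof -
  have r: "real n' = 2 * real k - real n - 1" using assms by (simp add: algebra_simps)
  have "real n' * (2 * real k - real n' - 1) = real n * (2 * real k - real n - 1)"
    unfolding r by (simp add: algebra_simps)
  then show ?thesis unfolding useq_def AA_def by simp
qed

lemma useq_AA: "useq q a k n = AA (real k + a k / real k) n * q powr (- (real n * (2 * real k - real n - 1) / 2))"
  unfolding useq_def AA_def by simp

theorem lemma2p1:
  fixes q :: real and a :: "nat \<Rightarrow> real"
  assumes "0 < q" and "q < 1"
    and "\<And>k. k \<ge> 1 \<Longrightarrow> a k > 0"
    and "\<exists>B. \<forall>k\<ge>1. a k \<le> B"
  shows "(\<forall>k\<ge>1. \<forall>j. j \<le> k - 1 \<longrightarrow> vseq q a k j > 0)
     \<and> ((\<exists>a0>0. (\<lambda>k. a k - a0) \<in> O(\<lambda>k. 1 / real k)) \<longrightarrow>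
         (\<exists>N0::nat. N0 > 0 \<and> (\<forall>N\<ge>N0. \<forall>k::nat. real k \<ge> q powr (- 3 * real N) \<longrightarrow>
             (\<forall>j. j + N \<le> k \<longrightarrow> vseq q a k j < vseq q a k (j + 1)))))"
proof -
  define X where "X k = real k + a k / real k" for k
  define E where "E k j = q powr (- (real j * (2 * real k - real j - 1) / 2))" for k j :: nat
  have Epos: "E k j > 0" for k j unfolding E_def using assms(1) by simp
  have Xgt: "X k > real k" if "k \<ge> 1" for k
    using assms(3)[OF that] that unfolding X_def by simp
  have part1: "vseq q a k j > 0" if k1: "k \<ge> 1" and jk: "j \<le> k - 1" for k j
  proof -
    define d where "d = k - 1 - j"
    have m: "2*k - j - 1 = k + d" using k1 jk unfolding d_def by simp
    have "vseq q a k j = (AA (X k) (k+d) - AA (X k) j) * E k j"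
      unfolding vseq_def m useq_AA[of q a k j] X_def E_def
      using useq_sym[of j "k+d" k q a] k1 jk d_def by (simp add: algebra_simps)
    moreover have "AA (X k) j < AA (X k) (k+d)"
      using AA_lt[OF Xgt[OF k1], of j d] k1 jk unfolding d_def by simp
    ultimately show ?thesis using Epos[of k j] by simp
  qed
  obtain B where B: "\<And>k. k \<ge> 1 \<Longrightarrow> a k \<le> B" using assms(4) by blast
  have B0: "B > 0" using B[of 1] assms(3)[of 1] by simp
  have "1 < 1/q" using assms(1,2) by simp
  then obtain n where n: "(1/q)^n > 5*(1+B)" using real_arch_pow by blast
  have part2: "vseq q a k j < vseq q a k (j + 1)" if N: "N \<ge> n + 3" and jN: "j + N \<le> k" for N k j
  proof -
    define e where "e = k - j - 3"
    have ke: "k = j + e + 3" using N jN unfolding e_def by simp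
    have en: "e \<ge> n" using N jN unfolding e_def by simp
    have k1: "k \<ge> 1" using ke by simp
    define x where "x = X k"
    define P where "P = AA x (j+2*e+5)"
    define Q where "Q = AA x j"
    define Z where "Z = q powr (- (real e + 2))"
    have xk: "x > real k" using Xgt[OF k1] unfolding x_def .
    have x0: "x > 0" using xk k1 by simp
    have xB: "x \<le> real k * (1 + B)"
    proof -
      have "a k / real k \<le> a k" using assms(3)[OF k1] k1 by (simp add: divide_le_eq)
      also have "\<dots> \<le> B" using B[OF k1] .
      also have "\<dots> \<le> real k * B" using B0 k1 by simp
      finally show ?thesis unfolding x_def X_def by (simp add: algebra_simps)
    qed
    have Ppos: "P > 0" unfolding P_def using AA_pos[OF x0] by simp
    have Qpos: "Q > 0" unfolding Q_def using AA_pos[OF x0] by simp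
    have v0: "vseq q a k j = (P - Q) * E k j"
    proof -
      have m: "2*k - j - 1 = j+2*e+5" using ke by simp
      show ?thesis
        unfolding vseq_def m useq_AA[of q a k j] P_def Q_def x_def X_def E_def
        using useq_sym[of j "j+2*e+5" k q a] ke by (simp add: algebra_simps)
    qed
    have E1: "E k (j+1) = E k j * Z"
    proof -
      have eqx: "- (real (j+1) * (2 * real k - real (j+1) - 1) / 2) = - (real j * (2 * real k - real j - 1) / 2) + - (real e + 2)"
        using ke by (simp add: algebra_simps)
      then show ?thesis unfolding E_def Z_def by (subst eqx) (rule powr_add)
    qed
    have v1: "vseq q a k (j+1) = (AA x (j+2*e+4) - AA x (j+1)) * E k (j+1)"
    proof -
      have m: "2*k - (j+1) - 1 = j+2*e+4" using ke by simp
      show ?thesis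
        unfolding vseq_def m useq_AA[of q a k "j+1"] x_def X_def E_def
        using useq_sym[of "j+1" "j+2*e+4" k q a] ke by (simp add: algebra_simps)
    qed
    define M where "M = real (j+2*e+5)"
    define R where "R = M * real (j+1)"
    define R' where "R' = (M - 1) * real (j+2)"
    define y where "y = x^2"
    have A4: "AA x (j+2*e+4) = P * M / x"
      using AA_Suc[of x "j+2*e+4"] x0 unfolding P_def M_def by (simp add: field_simps)
    have A3: "AA x (j+2*e+3) = P * M * (M - 1) / y"
      using AA_Suc[of x "j+2*e+4"] AA_Suc[of x "j+2*e+3"] x0 unfolding P_def M_def y_def
      by (simp add: field_simps power2_eq_square)
    have Aj1: "AA x (j+1) = Q * x / real (j+1)"
      using AA_Suc[of x j] unfolding Q_def by simp
    have Aj2: "AA x (j+2) = Q * y / (real (j+1) * real (j+2))"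
    proof -
      have "AA x (j+2) = AA x (j+1) * x / real (j+2)" using AA_Suc[of x "Suc j"] by simp
      also have "\<dots> = Q * y / (real (j+1) * real (j+2))" unfolding Aj1 y_def by (simp add: power2_eq_square)
      finally show ?thesis .
    qed
    have lt: "AA x (j+2) < AA x (j+2*e+3)"
      using AA_lt[OF xk, of "j+2" e] ke by (simp add: algebra_simps)
    have y0: "y > 0" unfolding y_def using x0 by simp
    have Rpos: "R > 0" unfolding R_def M_def by simp
    have R'pos: "R' > 0" unfolding R'_def M_def by simp
    have h1: "Q * y^2 \<le> P * R * R'"
    proof -
      have "Q * y / (real (j+1) * real (j+2)) < P * M * (M - 1) / y" using lt A3 Aj2 by simp
      moreover have Dp: "real (j+1) * real (j+2) * y > 0" using y0 by simp
      ultimately have "Q * y / (real (j+1) * real (j+2)) * (real (j+1) * real (j+2) * y)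
          < P * M * (M - 1) / y * (real (j+1) * real (j+2) * y)"
        by (rule mult_strict_right_mono)
      moreover have "Q * y / (real (j+1) * real (j+2)) * (real (j+1) * real (j+2) * y) = Q * y * y"
        by simp
      moreover have "P * M * (M - 1) / y * (real (j+1) * real (j+2) * y) = P * M * (M - 1) * (real (j+1) * real (j+2))"
        using y0 by simp
      ultimately have "Q * y * y < P * M * (M - 1) * (real (j+1) * real (j+2))" by simp
      then show ?thesis unfolding R_def R'_def by (simp add: algebra_simps power2_eq_square)
    qed
    have kk: "real k = real j + real e + 3" using ke by simp
    have Req: "R = (real k)^2 - (real e + 2)^2" unfolding R_def M_def using kk by (simp add: algebra_simps power2_eq_square)
    have R'eq: "R' = (real k)^2 - (real e + 1)^2" unfolding R'_def M_def using kk by (simp add: algebra_simps power2_eq_square)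
    have yk: "y > (real k)^2" unfolding y_def using xk k1 by (simp add: power_strict_mono)
    have h2: "R' < y" using R'eq yk zero_le_power2[of "real e + 1"] by linarith
    have h3: "R \<le> R'"
    proof -
      have "(real e + 1)^2 \<le> (real e + 2)^2" by (rule power_mono) auto
      then show ?thesis using Req R'eq by linarith
    qed
    have h4: "y - R \<le> 4*(y - R')"
    proof -
      have "(real e + 2)^2 \<le> 4 * (real e + 1)^2" by (simp add: algebra_simps power2_eq_square)
      then show ?thesis using helper4[OF _ Req R'eq yk] by blast
    qed
    have K1: "P - Q \<le> 5 * (P - Q*y/R)" and K2: "P - Q*y/R > 0"
      using key[OF h1 h2 Rpos h3 h4 Ppos] Qpos by auto
    have Mpos: "M > 0" unfolding M_def by simp
    have d1: "(M/x)*(Q*y/R) = Q*x/real(j+1)" unfolding R_def y_def using helperd[OF x0 Mpos, of "real (j+1)" Q] by simp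
    have diff: "AA x (j+2*e+4) - AA x (j+1) = (M / x) * (P - Q*y/R)"
      unfolding A4 Aj1 right_diff_distrib d1 by simp
    have Zbig: "Z > 5*(1+B)"
    proof -
      have "Z = inverse (q powr (real (e+2)))" 
      proof -
        have zz: "- (real e + 2) = - real (e+2)" by simp
        show ?thesis unfolding Z_def zz by (rule powr_minus)
      qed
      also have "\<dots> = inverse (q^(e+2))" using powr_realpow[OF assms(1), of "e+2"] by (simp only:)
      also have "\<dots> = (inverse q)^(e+2)" by (rule power_inverse[symmetric])
      also have "\<dots> = (1/q)^(e+2)" by (simp only: inverse_eq_divide)
      finally have Ze: "Z = (1/q)^(e+2)" .
      have "(1/q)^n \<le> (1/q)^(e+2)" using en assms(1,2) by (intro power_increasing) (auto simp: field_simps)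
      then show ?thesis using n Ze by simp
    qed
    have Mx: "M / x \<ge> 1 / (1+B)"
    proof -
      have "M \<ge> real k" unfolding M_def using kk by simp
      have "1 / (1+B) = real k / (real k * (1+B))" using k1 B0 by simp
      also have "\<dots> \<le> M / x"
        using \<open>M \<ge> real k\<close> xB x0 k1 B0 by (intro frac_le) auto
      finally show ?thesis .
    qed
    have ZM: "Z * (M / x) > 5"
    proof -
      have "Z * (M/x) \<ge> Z * (1/(1+B))" using Mx Zbig B0 by (intro mult_left_mono) auto
      moreover have "Z * (1/(1+B)) > 5" using Zbig B0 by (simp add: field_simps)
      ultimately show ?thesis by linarith
    qed
    have "vseq q a k j = (P - Q) * E k j" by (rule v0)
    also have "\<dots> \<le> 5 * (P - Q*y/R) * E k j" using K1 Epos[of k j] by (simp add: mult_right_mono)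
    also have "\<dots> < (Z * (M/x)) * (P - Q*y/R) * E k j"
      using ZM K2 Epos[of k j] by (intro mult_strict_right_mono) auto
    also have "\<dots> = vseq q a k (j+1)" unfolding v1 diff E1 by (simp add: algebra_simps)
    finally show ?thesis .
  qed
  show ?thesis
  proof (intro conjI impI)
    show "\<forall>k\<ge>1. \<forall>j. j \<le> k - 1 \<longrightarrow> vseq q a k j > 0" using part1 by blast
    show "\<exists>N0::nat. N0 > 0 \<and> (\<forall>N\<ge>N0. \<forall>k::nat. real k \<ge> q powr (- 3 * real N) \<longrightarrow>
             (\<forall>j. j + N \<le> k \<longrightarrow> vseq q a k j < vseq q a k (j + 1)))"
      apply (rule exI[of _ "n+3"])
      apply (intro conjI allI impI)
       apply simp
      apply (erule part2)
      apply assumption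
      done
  qed
qed

end
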